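(* Let $R>0$, $b\in\mathbb{R}^n\setminus\{0\}$, $a=\frac{|b|^2-R^2}{|b|^2}b$, and on $P=\{x:2|b|^2-R^2-2\langle b,x\rangle>0\}$ let $f(x)=\frac{|b|^2|x-a|^2}{2|b|^2-R^2-2\langle b,x\rangle}$. Let $k\ge2$ and let $\Sigma$ be a smooth $k$-dimensional submanifold of $P\setminus\{a\}$. Define on $\Sigma$ the vector field $$W(x)=\frac1k f(x)^{-\frac k2}(x-a)-F(f(x))\frac{b}{|b|^2},\qquad F(t)=\begin{cases}\frac{1}{k-2}t^{-\frac{k-2}{2}},&k\ge3,\\ -\frac12\log t,&k=2.\end{cases}$$ Then $$\operatorname{div}_\Sigma W=f^{-\frac k2}\frac{|(x-a)^\perp|^2}{|x-a|^2}+f^{-\frac{k-4}{2}}\frac{|b^\top|^2}{|b|^4|x-a|^2}.$$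
   Context: $\operatorname{div}_\Sigma X=\sum_{i=1}^k\langle D_{e_i}X,e_i\rangle$ for an orthonormal basis $e_i$ of $T_x\Sigma$ (tangential divergence of an ambient vector field along $\Sigma$). $X^\top$ is the orthogonal projection of $X$ onto $T_x\Sigma$ and $X^\perp=X-X^\top$. *)

theory Defs
  imports "HOL-Analysis.Analysis"
begin

definition ctr :: "real \<Rightarrow> 'a::euclidean_space \<Rightarrow> 'a" where
  "ctr R b = ((norm b ^ 2 - R ^ 2) / norm b ^ 2) *\<^sub>R b"

definition regP :: "real \<Rightarrow> 'a::euclidean_space \<Rightarrow> 'a set" where
  "regP R b = {x. 2 * norm b ^ 2 - R ^ 2 - 2 * (b \<bullet> x) > 0}"

definition ffun :: "real \<Rightarrow> 'a::euclidean_space \<Rightarrow> 'a \<Rightarrow> real" where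
  "ffun R b x = (norm b ^ 2 * norm (x - ctr R b) ^ 2) / (2 * norm b ^ 2 - R ^ 2 - 2 * (b \<bullet> x))"

definition Ffun :: "nat \<Rightarrow> real \<Rightarrow> real" where
  "Ffun k t = (if k \<ge> 3 then (1 / (real k - 2)) * t powr (- (real k - 2) / 2)
               else - (1 / 2) * ln t)"

definition Wfield :: "nat \<Rightarrow> real \<Rightarrow> 'a::euclidean_space \<Rightarrow> 'a \<Rightarrow> 'a" where
  "Wfield k R b x = ((1 / real k) * ffun R b x powr (- (real k / 2))) *\<^sub>R (x - ctr R b)
                    - (Ffun k (ffun R b x) / norm b ^ 2) *\<^sub>R b"

definition tproj :: "'a::euclidean_space set \<Rightarrow> 'a \<Rightarrow> 'a" where
  "tproj T v = (THE u. u \<in> T \<and> (\<forall>w\<in>T. (v - u) \<bullet> w = 0))"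

definition nproj :: "'a::euclidean_space set \<Rightarrow> 'a \<Rightarrow> 'a" where
  "nproj T v = v - tproj T v"

text \<open>Tangential divergence of an ambient field X at x along the k-plane spanned
  by the orthonormal basis B: sum of <D_e X, e>.\<close>
definition tdiv :: "'a::euclidean_space set \<Rightarrow> ('a \<Rightarrow> 'a) \<Rightarrow> 'a \<Rightarrow> real" where
  "tdiv B X x = (\<Sum>e\<in>B. frechet_derivative X (at x) e \<bullet> e)"

end

theory Submission
  imports Defs
begin

lemma onb_inner:
  fixes B :: "'a::euclidean_space set"
  assumes "finite B" "pairwise orthogonal B" "\<forall>e\<in>B. norm e = 1" "e \<in> B"
  shows "(\<Sum>e'\<in>B. c e' *\<^sub>R e') \<bullet> e = c e"
proof -
  have "(\<Sum>e'\<in>B. c e' *\<^sub>R e') \<bullet> e = (\<Sum>e'\<in>B. c e' * (e' \<bullet> e))"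
    by (simp add: inner_sum_left)
  also have "\<dots> = (\<Sum>e'\<in>B. if e' = e then c e else 0)"
  proof (rule sum.cong[OF refl])
    fix e' assume "e' \<in> B"
    show "c e' * (e' \<bullet> e) = (if e' = e then c e else 0)"
    proof (cases "e' = e")
      case True
      then show ?thesis using assms(3,4) by (simp add: inner_commute norm_eq_1[symmetric])
    next
      case False
      then show ?thesis using assms(2,4) \<open>e' \<in> B\<close> by (simp add: pairwise_def orthogonal_def)
    qed
  qed
  also have "\<dots> = c e" using assms(1,4) by simp
  finally show ?thesis .
qed

lemma onb_inner2:
  fixes B :: "'a::euclidean_space set"
  assumes "finite B" "pairwise orthogonal B" "\<forall>e\<in>B. norm e = 1"
  shows "(\<Sum>e'\<in>B. c e' *\<^sub>R e') \<bullet> (\<Sum>e\<in>B. d e *\<^sub>R e) = (\<Sum>e\<in>B. c e * d e)"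
proof -
  have "(\<Sum>e'\<in>B. c e' *\<^sub>R e') \<bullet> (\<Sum>e\<in>B. d e *\<^sub>R e) = (\<Sum>e\<in>B. d e * ((\<Sum>e'\<in>B. c e' *\<^sub>R e') \<bullet> e))"
    by (simp add: inner_sum_right)
  also have "\<dots> = (\<Sum>e\<in>B. c e * d e)"
    using onb_inner[OF assms] by (intro sum.cong) auto
  finally show ?thesis .
qed

lemma tproj_eq:
  fixes B T :: "'a::euclidean_space set"
  assumes "finite B" "pairwise orthogonal B" "\<forall>e\<in>B. norm e = 1" "span B = T"
  shows "tproj T v = (\<Sum>e\<in>B. (v \<bullet> e) *\<^sub>R e)"
proof -
  define u where "u = (\<Sum>e\<in>B. (v \<bullet> e) *\<^sub>R e)"
  have "u \<in> span B" unfolding u_def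
    by (rule span_sum, rule span_scale, rule span_base) simp
  then have uT: "u \<in> T" using assms(4) by simp
  have oB: "(v - u) \<bullet> e = 0" if "e \<in> B" for e
    using onb_inner[OF assms(1-3) that, of "\<lambda>e. v \<bullet> e"] unfolding u_def
    by (simp add: inner_diff_left)
  have oT: "\<forall>w\<in>T. (v - u) \<bullet> w = 0"
  proof
    fix w assume "w \<in> T"
    then have "w \<in> span B" using assms(4) by simp
    then have "orthogonal (v - u) w"
      by (rule orthogonal_to_span) (use oB in \<open>simp add: orthogonal_def\<close>)
    then show "(v - u) \<bullet> w = 0" by (simp add: orthogonal_def)
  qed
  have uniq: "u' = u" if "u' \<in> T \<and> (\<forall>w\<in>T. (v - u') \<bullet> w = 0)" for u'
  proof -
    have sT: "subspace T" using assms(4) subspace_span by blast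
    have dT: "u - u' \<in> T" using uT that sT by (simp add: subspace_diff)
    have "(u - u') \<bullet> (u - u') = (v - u') \<bullet> (u - u') - (v - u) \<bullet> (u - u')"
      by (simp add: algebra_simps inner_diff_left)
    also have "\<dots> = 0" using that oT dT by simp
    finally show ?thesis by simp
  qed
  have "tproj T v = u"
    unfolding tproj_def
    by (rule the1_equality) (use uT oT uniq in blast)+
  then show ?thesis unfolding u_def .
qed

lemma tproj_norm:
  fixes B T :: "'a::euclidean_space set"
  assumes "finite B" "pairwise orthogonal B" "\<forall>e\<in>B. norm e = 1" "span B = T"
  shows "norm (tproj T v) ^ 2 = (\<Sum>e\<in>B. (v \<bullet> e) ^ 2)"
    and "norm (nproj T v) ^ 2 = norm v ^ 2 - (\<Sum>e\<in>B. (v \<bullet> e) ^ 2)"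
proof -
  define u where "u = (\<Sum>e\<in>B. (v \<bullet> e) *\<^sub>R e)"
  have tp: "tproj T v = u" using tproj_eq[OF assms] u_def by simp
  have uu: "u \<bullet> u = (\<Sum>e\<in>B. (v \<bullet> e) ^ 2)"
    unfolding u_def by (simp add: onb_inner2[OF assms(1-3)] power2_eq_square)
  have uv: "u \<bullet> v = (\<Sum>e\<in>B. (v \<bullet> e) ^ 2)"
    unfolding u_def by (simp add: inner_sum_left power2_eq_square) (metis inner_commute)
  show "norm (tproj T v) ^ 2 = (\<Sum>e\<in>B. (v \<bullet> e) ^ 2)"
    using uu tp by (simp add: power2_norm_eq_inner)
  show "norm (nproj T v) ^ 2 = norm v ^ 2 - (\<Sum>e\<in>B. (v \<bullet> e) ^ 2)"
    unfolding nproj_def tp power2_norm_eq_inner using uu uv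
    by (simp add: inner_diff_left inner_diff_right inner_commute)
qed

lemma cardB:
  fixes B T :: "'a::euclidean_space set"
  assumes "pairwise orthogonal B" "\<forall>e\<in>B. norm e = 1" "span B = T" "dim T = k"
  shows "card B = k"
proof -
  have "0 \<notin> B" using assms(2) by force
  then have "independent B" using pairwise_orthogonal_independent assms(1) by blast
  then show ?thesis using dim_span_eq_card_independent assms(3,4) by metis
qed


lemma ffun_deriv:
  fixes b x :: "'a::euclidean_space"
  assumes D: "2 * norm b ^ 2 - R ^ 2 - 2 * (b \<bullet> x) > 0"
  shows "(ffun R b has_derivative (\<lambda>h. (norm b ^ 2 * (2 * ((x - ctr R b) \<bullet> h)) * (2 * norm b ^ 2 - R ^ 2 - 2 * (b \<bullet> x))
      + norm b ^ 2 * norm (x - ctr R b) ^ 2 * (2 * (b \<bullet> h))) / (2 * norm b ^ 2 - R ^ 2 - 2 * (b \<bullet> x)) ^ 2)) (at x)"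
proof -
  have e: "ffun R b = (\<lambda>z. (norm b ^ 2 * ((z - ctr R b) \<bullet> (z - ctr R b))) / (2 * norm b ^ 2 - R ^ 2 - 2 * (b \<bullet> z)))"
    by (simp add: ffun_def power2_norm_eq_inner fun_eq_iff)
  have i1: "((\<lambda>z. z - ctr R b) has_derivative (\<lambda>h. h)) (at x)"
    using has_derivative_diff[OF has_derivative_ident has_derivative_const[of "ctr R b"]] by simp
  have num: "((\<lambda>z. norm b ^ 2 * ((z - ctr R b) \<bullet> (z - ctr R b))) has_derivative
      (\<lambda>h. norm b ^ 2 * ((x - ctr R b) \<bullet> h + h \<bullet> (x - ctr R b)))) (at x)"
    by (rule has_derivative_mult_right[OF has_derivative_inner[OF i1 i1]])
  have den: "((\<lambda>z. 2 * norm b ^ 2 - R ^ 2 - 2 * (b \<bullet> z)) has_derivative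
      (\<lambda>h. 0 - 2 * (b \<bullet> h))) (at x)"
    by (rule has_derivative_diff[OF has_derivative_const has_derivative_mult_right[OF has_derivative_inner_right[OF has_derivative_ident]]])
  show ?thesis unfolding e
    apply (rule has_derivative_eq_rhs[OF has_derivative_divide'[OF num den]])
    using D apply simp
    apply (rule ext)
    subgoal for h
      unfolding power2_norm_eq_inner inner_commute[of h "x - ctr R b"]
      by (simp add: power2_eq_square algebra_simps)
    done
qed

lemma Ffun_deriv:
  assumes "k \<ge> 2" "t > 0"
  shows "(Ffun k has_real_derivative (- (1/2) * t powr (- (real k / 2)))) (at t)"
proof (cases "k \<ge> 3")
  case True
  have e: "Ffun k = (\<lambda>t. (1 / (real k - 2)) * t powr (- (real k - 2) / 2))"
    using True by (simp add: Ffun_def fun_eq_iff)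
  have k: "real k - 2 > 0" using True by simp
  have "((\<lambda>t. (1 / (real k - 2)) * t powr (- (real k - 2) / 2)) has_real_derivative
      (1 / (real k - 2)) * ((- (real k - 2) / 2) * t powr (- (real k - 2) / 2 - 1))) (at t)"
    by (intro DERIV_cmult has_real_derivative_powr assms(2))
  moreover have "(1 / (real k - 2)) * ((- (real k - 2) / 2) * t powr (- (real k - 2) / 2 - 1))
      = - (1/2) * t powr (- (real k / 2))"
    using k by (simp add: field_simps)
  ultimately show ?thesis unfolding e by simp
next
  case False
  then have k2: "k = 2" using assms(1) by simp
  have e: "Ffun k = (\<lambda>t. - (1 / 2) * ln t)"
    using k2 by (simp add: Ffun_def fun_eq_iff)
  have "((\<lambda>t. - (1 / 2) * ln t) has_real_derivative - (1/2) * (1 / t)) (at t)"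
    by (intro DERIV_cmult DERIV_ln_divide assms(2))
  then show ?thesis unfolding e using k2 assms(2) by (simp add: powr_minus_divide)
qed


theorem mainTheorem6:
  fixes R :: real and b x :: "'a::euclidean_space" and k :: nat
    and T B :: "'a set"
  assumes "R > 0" and "b \<noteq> 0" and "k \<ge> 2"
    and "x \<in> regP R b" and "x \<noteq> ctr R b"
    and "subspace T" and "dim T = k"
    and "finite B" and "B \<subseteq> T" and "pairwise orthogonal B"
    and "\<forall>e\<in>B. norm e = 1" and "span B = T"
  shows "Wfield k R b differentiable (at x) \<and>
    tdiv B (Wfield k R b) x =
      ffun R b x powr (- (real k / 2)) * norm (nproj T (x - ctr R b)) ^ 2 / norm (x - ctr R b) ^ 2
      + ffun R b x powr (- (real k - 4) / 2) * norm (tproj T b) ^ 2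
          / (norm b ^ 4 * norm (x - ctr R b) ^ 2)"
proof -
  define \<beta> where "\<beta> = norm b ^ 2"
  define a where "a = ctr R b"
  define y where "y = x - a"
  define Dx where "Dx = 2 * norm b ^ 2 - R ^ 2 - 2 * (b \<bullet> x)"
  define fx where "fx = ffun R b x"
  define n where "n = norm y ^ 2"
  define p where "p = - (real k / 2)"
  define P where "P = fx powr p"
  have Dpos: "Dx > 0" using assms(4) by (simp add: regP_def Dx_def)
  have bpos: "\<beta> > 0" using assms(2) by (simp add: \<beta>_def)
  have npos: "n > 0" using assms(5) by (simp add: n_def y_def a_def)
  have fxe: "fx = \<beta> * n / Dx" by (simp add: fx_def ffun_def \<beta>_def n_def y_def a_def Dx_def)
  have fpos: "fx > 0" using fxe Dpos bpos npos by simp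
  define df where "df = (\<lambda>h. (\<beta> * (2 * (y \<bullet> h)) * Dx + \<beta> * n * (2 * (b \<bullet> h))) / Dx ^ 2)"
  have dF: "(ffun R b has_derivative df) (at x)"
    using ffun_deriv[of b R x] Dpos unfolding df_def \<beta>_def y_def a_def Dx_def n_def by simp
  have d1: "((\<lambda>z. ffun R b z powr p) has_derivative (\<lambda>h. df h * (p * fx powr (p - 1)))) (at x)"
    using DERIV_compose_FDERIV[OF has_real_derivative_powr[OF fpos[unfolded fx_def]] dF]
    unfolding fx_def .
  have d2: "((\<lambda>z. Ffun k (ffun R b z)) has_derivative (\<lambda>h. df h * (- (1/2) * fx powr p))) (at x)"
    using DERIV_compose_FDERIV[OF Ffun_deriv[OF assms(3) fpos[unfolded fx_def]] dF]
    unfolding fx_def p_def .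
  define DW where "DW = (\<lambda>h. ((1 / real k) * P) *\<^sub>R h
      + ((1 / real k) * (df h * (p * fx powr (p - 1)))) *\<^sub>R y
      - (inverse \<beta> * (df h * (- (1/2) * fx powr p))) *\<^sub>R b)"
  have We: "Wfield k R b = (\<lambda>z. ((1 / real k) * ffun R b z powr p) *\<^sub>R (z - a)
      - (inverse \<beta> * Ffun k (ffun R b z)) *\<^sub>R b)"
    unfolding Wfield_def p_def a_def \<beta>_def divide_inverse
    by (rule ext) (simp only: mult.commute)
  have i1: "((\<lambda>z. z - a) has_derivative (\<lambda>h. h)) (at x)"
    using has_derivative_diff[OF has_derivative_ident has_derivative_const[of a]] by simp
  note dW0 = has_derivative_diff[OF
        has_derivative_scaleR[OF has_derivative_mult_right[OF d1, of "1 / real k"] i1]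
        has_derivative_scaleR[OF has_derivative_mult_right[OF d2, of "inverse \<beta>"] has_derivative_const[of b]]]
  have dW: "(Wfield k R b has_derivative DW) (at x)"
    unfolding We DW_def using dW0[folded fx_def y_def] by (simp add: P_def)
  have fd: "frechet_derivative (Wfield k R b) (at x) = DW"
    using frechet_derivative_at[OF dW] by simp
  have cB: "card B = k" using cardB assms(10,11,12,7) by blast
  have pm1: "fx powr (p - 1) = P / fx" using fpos by (simp add: P_def powr_diff)
  have termE: "DW e \<bullet> e = P / real k + P / n * ((fx / \<beta>) ^ 2 * (b \<bullet> e) ^ 2 - (y \<bullet> e) ^ 2)"
    if "e \<in> B" for e
  proof -
    have ee: "e \<bullet> e = 1" using assms(11) that by (simp add: norm_eq_1[symmetric])
    have k0: "real k > 0" using assms(3) by simp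
    have "DW e \<bullet> e = (1 / real k) * (df e * (p * (P / fx))) * (y \<bullet> e) + (1 / real k) * P
        - (inverse \<beta> * (df e * (- (1/2) * P))) * (b \<bullet> e)"
      by (simp add: DW_def inner_diff_left inner_add_left ee pm1 P_def)
    also have "\<dots> = P / real k + P / n * ((fx / \<beta>) ^ 2 * (b \<bullet> e) ^ 2 - (y \<bullet> e) ^ 2)"
      unfolding df_def p_def fxe using k0 bpos npos Dpos
      by (simp add: field_simps power2_eq_square)
    finally show ?thesis .
  qed
  have "tdiv B (Wfield k R b) x = (\<Sum>e\<in>B. P / real k + P / n * ((fx / \<beta>) ^ 2 * (b \<bullet> e) ^ 2 - (y \<bullet> e) ^ 2))"
    unfolding tdiv_def fd using termE by simp
  also have "\<dots> = P + P / n * ((fx / \<beta>) ^ 2 * (\<Sum>e\<in>B. (b \<bullet> e) ^ 2) - (\<Sum>e\<in>B. (y \<bullet> e) ^ 2))"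
    using cB assms(3) by (simp add: sum.distrib sum_subtractf sum_distrib_left right_diff_distrib)
  also have "\<dots> = P * (n - (\<Sum>e\<in>B. (y \<bullet> e) ^ 2)) / n
      + (P * fx ^ 2) * (\<Sum>e\<in>B. (b \<bullet> e) ^ 2) / (\<beta> ^ 2 * n)"
    using npos bpos by (simp add: field_simps)
  also have "\<dots> = ffun R b x powr (- (real k / 2)) * norm (nproj T (x - ctr R b)) ^ 2 / norm (x - ctr R b) ^ 2
      + ffun R b x powr (- (real k - 4) / 2) * norm (tproj T b) ^ 2
          / (norm b ^ 4 * norm (x - ctr R b) ^ 2)"
  proof -
    have "fx powr (- (real k - 4) / 2) = P * fx ^ 2"
    proof -
      have "fx powr (- (real k - 4) / 2) = fx powr (p + 2)" by (simp add: p_def field_simps)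
      also have "\<dots> = P * fx ^ 2" using fpos by (simp add: powr_add P_def powr_numeral)
      finally show ?thesis .
    qed
    moreover have "norm b ^ 4 = \<beta> ^ 2" by (simp add: \<beta>_def)
    ultimately show ?thesis
      using tproj_norm[OF assms(8,10,11,12), of y] tproj_norm[OF assms(8,10,11,12), of b]
      by (simp add: fx_def P_def p_def y_def a_def n_def)
  qed
  finally have main: "tdiv B (Wfield k R b) x = ffun R b x powr (- (real k / 2)) * norm (nproj T (x - ctr R b)) ^ 2 / norm (x - ctr R b) ^ 2
      + ffun R b x powr (- (real k - 4) / 2) * norm (tproj T b) ^ 2
          / (norm b ^ 4 * norm (x - ctr R b) ^ 2)" .
  have "Wfield k R b differentiable (at x)" using dW by (auto simp: differentiable_def)
  then show ?thesis using main by simp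
qed

end
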